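(* Let $C>0$ be given and suppose the following assumptions hold. (A1): there exist class-$\mathcal{K}_\infty$ functions $\underline{\eta},\overline{\eta}$ with $\underline{\eta}(|x-\bar x|)\le \ell^{\star}(x)\le\overline{\eta}(|x-\bar x|)$ for all $x\in X$. (A2): there exist $\gamma\in\mathbb{R}_{>0}$ and a neighbourhood $\mathcal{N}$ of $\bar x$ such that $V_\infty(x)\le\gamma\,\ell^{\star}(x)$ for all $x\in\mathcal{N}\cap X$. Let $M:=\inf_{x\in X\setminus\mathcal{N}}\ell^{\star}(x)$ and $\beta:=\max\{C/M,\gamma\}$. Let $\delta\in(0,\beta)$ and $N\in\mathbb{N}$, set $T:=N\delta$, and suppose (A3): there exists $\bar C\in\mathbb{R}_{>0}$ such that for all $\delta'\in(0,T]$: $\delta'\,\ell^{\star}(\hat x)\le\bar C\,V_{\delta'}(\hat x)$ for all $\hat x\in V_T^{-1}[0,C]$. If \[ \max\Big\{\frac{C}{M\delta},\ \bar C\Big(\frac{\beta}{\delta}\Big)^2\Big\}\cdot\Big(\frac{\beta}{\beta+\delta}\Big)^{N-1}<1, \] then, with $\alpha:=\bar C(\beta/\delta)^2\big(\beta/(\beta+\delta)\big)^{N-1}$, for every $\hat x\in V_T^{-1}[0,C]$ and every minimiser $u^\star\in\mathcal{U}_T(\hat x)$ of $J_T(\hat x,\cdot)$, \[ V_T\big(x(\delta;\hat x,u^\star)\big)\le V_T(\hat x)-(1-\alpha)\int_0^\delta \ell\big(x(s;\hat x,u^\star),u^\star(s)\big)\,\mathrm{d}s. \]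
   Context: Consider the control system $\dot x(t)=f(x(t),u(t))$, $x(0)=x_0$, with $f:\mathbb{R}^n\times\mathbb{R}^m\to\mathbb{R}^n$ continuous and locally Lipschitz in its first argument on $\mathbb{R}^n\setminus\{0\}$; for $u\in L^\infty_{\mathrm{loc}}(\mathbb{R}_{\ge0},\mathbb{R}^m)$ the unique (maximal) solution is denoted $x(t;x_0,u)$. A set $\mathcal{E}\subseteq\mathbb{R}^n\times\mathbb{R}^m$ defines the constraints $(x(t),u(t))\in\mathcal{E}$. Let $U(x):=\{u\in\mathbb{R}^m:(x,u)\in\mathcal{E}\}$ and $X:=\{x: U(x)\neq\emptyset\}$. For $x_0\in X$ and $T>0$, $\mathcal{U}_T(x_0)$ is the set of $u\in L^\infty_{\mathrm{loc}}(\mathbb{R}_{\ge0},\mathbb{R}^m)$ such that the solution exists and satisfies $(x(t;x_0,u),u(t))\in\mathcal{E}$ on $[0,T]$; $\mathcal{U}_\infty(x_0)$ is defined analogously for all $t\ge0$. The stage cost $\ell:\mathbb{R}^n\times\mathbb{R}^m\to\mathbb{R}_{\ge0}$ is continuous; $J_T(x_0,u):=\int_0^T\ell(x(s;x_0,u),u(s))\,\mathrm{d}s$, $V_T(x_0):=\inf_{u\in\mathcal{U}_T(x_0)}J_T(x_0,u)$ (with $V_T(x_0)=+\infty$ if $\mathcal{U}_T(x_0)=\emptyset$), and $V_\infty$ is defined analogously over $\mathcal{U}_\infty(x_0)$ with the integral over $[0,\infty)$. $V_T^{-1}[0,C]:=\{x\in X: V_T(x)\le C\}$. $\ell^{\star}(x):=\inf_{u\in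 U(x)}\ell(x,u)$. The point $\bar x\in X$ is a controlled equilibrium: there is $\bar u\in U(\bar x)$ with $f(\bar x,\bar u)=0$. It is a standing assumption that whenever $\mathcal{U}_T(x_0)\neq\emptyset$, a minimiser of $J_T(x_0,\cdot)$ over $\mathcal{U}_T(x_0)$ exists. (In the MPC scheme with sampling time $\delta$ and horizon $T=N\delta$, such a minimiser $u^\star$ for the measured state $\hat x$ is applied on $[0,\delta)$, so $x(\delta;\hat x,u^\star)$ is the next closed-loop state.) *)

theory Defs
  imports "HOL-Analysis.Analysis"
begin

definition class_K_inf :: "(real \<Rightarrow> real) \<Rightarrow> bool" where
  "class_K_inf \<eta> \<longleftrightarrow> continuous_on {0..} \<eta> \<and> \<eta> 0 = 0 \<and> strict_mono_on {0..} \<eta>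
     \<and> filterlim \<eta> at_top at_top"

definition Linf_loc :: "(real \<Rightarrow> 'b::euclidean_space) \<Rightarrow> bool" where
  "Linf_loc u \<longleftrightarrow> set_borel_measurable lborel {0..} u \<and>
     (\<forall>T. \<exists>B. AE t in lborel. t \<in> {0..T} \<longrightarrow> norm (u t) \<le> B)"

text \<open>x is a (Caratheodory) solution of x' = f(x,u), x(0)=x0 on [0,T].\<close>
definition is_sol :: "('a::euclidean_space \<Rightarrow> 'b \<Rightarrow> 'a) \<Rightarrow> 'a \<Rightarrow> (real \<Rightarrow> 'b)
     \<Rightarrow> real \<Rightarrow> (real \<Rightarrow> 'a) \<Rightarrow> bool" where
  "is_sol f x0 u T x \<longleftrightarrow>
     (\<forall>t\<in>{0..T}. ((\<lambda>s. f (x s) (u s)) has_integral (x t - x0)) {0..t})"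

definition traj :: "('a::euclidean_space \<Rightarrow> 'b \<Rightarrow> 'a) \<Rightarrow> 'a \<Rightarrow> (real \<Rightarrow> 'b) \<Rightarrow> real \<Rightarrow> 'a" where
  "traj f x0 u t = (THE y. \<exists>x. is_sol f x0 u t x \<and> x t = y)"

definition Uset :: "('a \<times> 'b) set \<Rightarrow> 'a \<Rightarrow> 'b set" where
  "Uset E x = {u. (x, u) \<in> E}"

definition Xset :: "('a \<times> 'b) set \<Rightarrow> 'a set" where
  "Xset E = {x. Uset E x \<noteq> {}}"

definition adm :: "('a::euclidean_space \<Rightarrow> 'b::euclidean_space \<Rightarrow> 'a) \<Rightarrow> ('a \<times> 'b) set
     \<Rightarrow> real \<Rightarrow> 'a \<Rightarrow> (real \<Rightarrow> 'b) set" where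
  "adm f E T x0 = {u. Linf_loc u \<and>
     (\<exists>x. is_sol f x0 u T x \<and> (\<forall>t\<in>{0..T}. (x t, u t) \<in> E))}"

definition adm_inf :: "('a::euclidean_space \<Rightarrow> 'b::euclidean_space \<Rightarrow> 'a) \<Rightarrow> ('a \<times> 'b) set
     \<Rightarrow> 'a \<Rightarrow> (real \<Rightarrow> 'b) set" where
  "adm_inf f E x0 = {u. Linf_loc u \<and>
     (\<forall>T\<ge>0. \<exists>x. is_sol f x0 u T x \<and> (\<forall>t\<in>{0..T}. (x t, u t) \<in> E))}"

definition Jcost :: "('a::euclidean_space \<Rightarrow> 'b::euclidean_space \<Rightarrow> 'a) \<Rightarrow> ('a \<Rightarrow> 'b \<Rightarrow> real)
     \<Rightarrow> real \<Rightarrow> 'a \<Rightarrow> (real \<Rightarrow> 'b) \<Rightarrow> ennreal" where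
  "Jcost f l T x0 u = (\<integral>\<^sup>+ s \<in> {0..T}. ennreal (l (traj f x0 u s) (u s)) \<partial>lborel)"

definition Jcost_inf :: "('a::euclidean_space \<Rightarrow> 'b::euclidean_space \<Rightarrow> 'a) \<Rightarrow> ('a \<Rightarrow> 'b \<Rightarrow> real)
     \<Rightarrow> 'a \<Rightarrow> (real \<Rightarrow> 'b) \<Rightarrow> ennreal" where
  "Jcost_inf f l x0 u = (\<integral>\<^sup>+ s \<in> {0..}. ennreal (l (traj f x0 u s) (u s)) \<partial>lborel)"

text \<open>Value functions (infimum over the empty set is +infinity = top).\<close>
definition Vfun :: "('a::euclidean_space \<Rightarrow> 'b::euclidean_space \<Rightarrow> 'a) \<Rightarrow> ('a \<times> 'b) set
     \<Rightarrow> ('a \<Rightarrow> 'b \<Rightarrow> real) \<Rightarrow> real \<Rightarrow> 'a \<Rightarrow> ennreal" where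
  "Vfun f E l T x0 = (INF u \<in> adm f E T x0. Jcost f l T x0 u)"

definition Vfun_inf :: "('a::euclidean_space \<Rightarrow> 'b::euclidean_space \<Rightarrow> 'a) \<Rightarrow> ('a \<times> 'b) set
     \<Rightarrow> ('a \<Rightarrow> 'b \<Rightarrow> real) \<Rightarrow> 'a \<Rightarrow> ennreal" where
  "Vfun_inf f E l x0 = (INF u \<in> adm_inf f E x0. Jcost_inf f l x0 u)"

definition sublevel :: "('a::euclidean_space \<Rightarrow> 'b::euclidean_space \<Rightarrow> 'a) \<Rightarrow> ('a \<times> 'b) set
     \<Rightarrow> ('a \<Rightarrow> 'b \<Rightarrow> real) \<Rightarrow> real \<Rightarrow> real \<Rightarrow> 'a set" where
  "sublevel f E l T C = {x \<in> Xset E. Vfun f E l T x \<le> ennreal C}"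

definition ellstar :: "('a \<times> 'b) set \<Rightarrow> ('a \<Rightarrow> 'b \<Rightarrow> real) \<Rightarrow> 'a \<Rightarrow> real" where
  "ellstar E l x = Inf (l x ` Uset E x)"

end

theory Submission
  imports Defs
begin


lemma sol_restrict: "is_sol f x0 u T x \<Longrightarrow> t \<le> T \<Longrightarrow> is_sol f x0 u t x"
  by (auto simp: is_sol_def)

lemma sol_at0: assumes "is_sol f x0 u T x" "0 \<le> T" shows "x 0 = x0"
proof -
  have "((\<lambda>s. f (x s) (u s)) has_integral (x 0 - x0)) {0..0}"
    using assms unfolding is_sol_def by (meson atLeastAtMost_iff order_refl)
  then have "x 0 - x0 = integral {0..0} (\<lambda>s. f (x s) (u s))" by (rule integral_unique[symmetric])
  then show ?thesis by simp
qed

lemma sol_cong: assumes "is_sol f x0 u T x" "\<And>s. 0 \<le> s \<Longrightarrow> s \<le> T \<Longrightarrow> u' s = u s"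
  shows "is_sol f x0 u' T x"
  unfolding is_sol_def
proof
  fix t assume t: "t \<in> {0..T}"
  have "((\<lambda>s. f (x s) (u s)) has_integral (x t - x0)) {0..t}" using assms(1) t unfolding is_sol_def by auto
  then show "((\<lambda>s. f (x s) (u' s)) has_integral (x t - x0)) {0..t}"
    by (rule has_integral_eq[rotated]) (use t assms(2) in auto)
qed

lemma sol_cont: assumes "is_sol f x0 u T x" "0 \<le> T" shows "continuous_on {0..T} x"
proof -
  let ?F = "\<lambda>s. f (x s) (u s)"
  have int: "?F integrable_on {0..T}" using assms unfolding is_sol_def by auto
  have "continuous_on {0..T} (\<lambda>t. x0 + integral {0..t} ?F)"
    by (intro continuous_intros indefinite_integral_continuous_1 int)
  moreover have "\<And>t. t \<in> {0..T} \<Longrightarrow> x0 + integral {0..t} ?F = x t"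
  proof -
    fix t assume "t \<in> {0..T}"
    then have "(?F has_integral (x t - x0)) {0..t}" using assms unfolding is_sol_def by auto
    then have "integral {0..t} ?F = x t - x0" by (rule integral_unique)
    then show "x0 + integral {0..t} ?F = x t" by simp
  qed
  ultimately show ?thesis by (rule continuous_on_eq)
qed

lemma sol_shift: assumes "is_sol f x0 u T x" "0 \<le> a" "a \<le> T"
  shows "is_sol f (x a) (\<lambda>t. u (t + a)) (T - a) (\<lambda>t. x (t + a))"
  unfolding is_sol_def
proof
  fix t assume t: "t \<in> {0..T - a}"
  let ?F = "\<lambda>s. f (x s) (u s)"
  have h1: "(?F has_integral (x (t + a) - x0)) {0..t+a}" using assms t unfolding is_sol_def by auto
  have h2: "(?F has_integral (x a - x0)) {0..a}" using assms t unfolding is_sol_def by auto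
  have sub: "{a..t+a} \<subseteq> {0..t+a}" using assms by auto
  have "?F integrable_on {a..t+a}"
    by (rule integrable_subinterval_real[OF has_integral_integrable[OF h1] sub])
  then have h3: "(?F has_integral integral {a..t+a} ?F) {a..t+a}" by auto
  have "(?F has_integral (x a - x0 + integral {a..t+a} ?F)) {0..t+a}"
    by (rule has_integral_combine[OF _ _ h2 h3]) (use t assms in auto)
  then have "x a - x0 + integral {a..t+a} ?F = x (t + a) - x0" using h1 has_integral_unique by blast
  then have "integral {a..t+a} ?F = x (t + a) - x a" by (simp add: algebra_simps)
  with h3 have "(?F has_integral (x (t + a) - x a)) {a..t+a}" by simp
  from has_integral_shift_real_ivl[OF this, of a]
  show "((\<lambda>s. f (x (s + a)) (u (s + a))) has_integral (x (t + a) - x a)) {0..t}" by simp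
qed

lemma sol_concat: assumes u: "is_sol f x0 u a x" and v: "is_sol f (x a) v b y" and a: "0 \<le> a" and b: "0 \<le> b"
  shows "is_sol f x0 (\<lambda>t. if t < a then u t else v (t - a)) (a + b) (\<lambda>t. if t \<le> a then x t else y (t - a))"
  unfolding is_sol_def
proof
  let ?w = "\<lambda>t. if t < a then u t else v (t - a)"
  let ?z = "\<lambda>t. if t \<le> a then x t else y (t - a)"
  let ?F = "\<lambda>s. f (?z s) (?w s)"
  have y0: "y 0 = x a" using sol_at0[OF v b] .
  have A: "(?F has_integral (x t - x0)) {0..t}" if t: "0 \<le> t" "t \<le> a" for t
  proof -
    have h: "((\<lambda>s. f (x s) (u s)) has_integral (x t - x0)) {0..t}" using u t unfolding is_sol_def by auto
    show ?thesis
    proof (rule has_integral_spike[OF negligible_sing[of a] _ h])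
      fix s assume "s \<in> {0..t} - {a}"
      then show "?F s = f (x s) (u s)" using t by auto
    qed
  qed
  fix t assume t: "t \<in> {0..a + b}"
  show "(?F has_integral (?z t - x0)) {0..t}"
  proof (cases "t \<le> a")
    case True then show ?thesis using A t by auto
  next
    case False
    have "((\<lambda>s. f (y s) (v s)) has_integral (y (t - a) - x a)) {0..t-a}"
      using v t False unfolding is_sol_def by auto
    from has_integral_shift_real_ivl[OF this, of "-a"]
    have h: "((\<lambda>s. f (y (s - a)) (v (s - a))) has_integral (y (t - a) - x a)) {a..t}" by simp
    have B: "(?F has_integral (y (t - a) - x a)) {a..t}"
    proof (rule has_integral_spike[OF negligible_sing[of a] _ h])
      fix s assume "s \<in> {a..t} - {a}"
      then show "?F s = f (y (s - a)) (v (s - a))" by auto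
    qed
    have "(?F has_integral (x a - x0 + (y (t - a) - x a))) {0..t}"
      by (rule has_integral_combine[OF _ _ A[of a] B]) (use a False in auto)
    then show ?thesis using False by simp
  qed
qed



lemma Linf_meas: "Linf_loc u \<Longrightarrow> (\<lambda>t. indicator {0..} t *\<^sub>R u t) \<in> borel_measurable borel"
  by (simp add: Linf_loc_def set_borel_measurable_def)

lemma Linf_shift: assumes "Linf_loc u" "0 \<le> a" shows "Linf_loc (\<lambda>t. u (t + a))"
  unfolding Linf_loc_def
proof
  let ?m = "\<lambda>t. indicator {0..} t *\<^sub>R u t"
  have [measurable]: "?m \<in> borel_measurable borel" using Linf_meas[OF assms(1)] .
  have "(\<lambda>t. indicator {0..} t *\<^sub>R ?m (t + a)) \<in> borel_measurable borel" by measurable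
  moreover have "(\<lambda>t. indicator {0..} t *\<^sub>R ?m (t + a)) = (\<lambda>t. indicator {0..} t *\<^sub>R u (t + a))"
    using assms(2) by (auto simp: indicator_def fun_eq_iff)
  ultimately show "set_borel_measurable lborel {0..} (\<lambda>t. u (t + a))"
    by (simp add: set_borel_measurable_def)
next
  show "\<forall>T. \<exists>B. AE t in lborel. t \<in> {0..T} \<longrightarrow> norm (u (t + a)) \<le> B"
  proof
    fix T
    obtain B where B: "AE t in lborel. t \<in> {0..T + a} \<longrightarrow> norm (u t) \<le> B"
      using assms(1) unfolding Linf_loc_def by blast
    then obtain Nn where Nn: "\<And>t. t \<in> space lborel - Nn \<Longrightarrow> (t \<in> {0..T + a} \<longrightarrow> norm (u t) \<le> B)"
      "Nn \<in> null_sets lborel" by (rule AE_E3) blast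
    have "{t. t - (-a) \<in> Nn} \<in> null_sets lborel" by (rule null_sets_translation[OF Nn(2)])
    then have "AE t in lborel. t \<in> {0..T} \<longrightarrow> norm (u (t + a)) \<le> B"
    proof (rule AE_I')
      show "{t \<in> space lborel. \<not> (t \<in> {0..T} \<longrightarrow> norm (u (t + a)) \<le> B)} \<subseteq> {t. t - - a \<in> Nn}"
      proof
        fix t assume t: "t \<in> {t \<in> space lborel. \<not> (t \<in> {0..T} \<longrightarrow> norm (u (t + a)) \<le> B)}"
        show "t \<in> {t. t - - a \<in> Nn}"
        proof (rule ccontr)
          assume "t \<notin> {t. t - - a \<in> Nn}"
          then have "t + a \<in> space lborel - Nn" by simp
          from Nn(1)[OF this] t assms(2) show False by auto
        qed
      qed
    qed
    then show "\<exists>B. AE t in lborel. t \<in> {0..T} \<longrightarrow> norm (u (t + a)) \<le> B" by blast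
  qed
qed

lemma Linf_concat: assumes "Linf_loc u" "Linf_loc v" "0 \<le> a"
  shows "Linf_loc (\<lambda>t. if t < a then u t else v (t - a))"
  unfolding Linf_loc_def
proof
  let ?mu = "\<lambda>t. indicator {0..} t *\<^sub>R u t"
  let ?mv = "\<lambda>t. indicator {0..} t *\<^sub>R v t"
  have [measurable]: "?mu \<in> borel_measurable borel" using Linf_meas[OF assms(1)] .
  have [measurable]: "?mv \<in> borel_measurable borel" using Linf_meas[OF assms(2)] .
  have "(\<lambda>t. if t < a then ?mu t else ?mv (t - a)) \<in> borel_measurable borel" by measurable
  moreover have "(\<lambda>t. if t < a then ?mu t else ?mv (t - a)) =
     (\<lambda>t. indicator {0..} t *\<^sub>R (if t < a then u t else v (t - a)))"
    using assms(3) by (auto simp: indicator_def fun_eq_iff)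
  ultimately show "set_borel_measurable lborel {0..} (\<lambda>t. if t < a then u t else v (t - a))"
    by (simp add: set_borel_measurable_def)
next
  show "\<forall>T. \<exists>B. AE t in lborel. t \<in> {0..T} \<longrightarrow> norm (if t < a then u t else v (t - a)) \<le> B"
  proof
    fix T
    obtain Bu where Bu: "AE t in lborel. t \<in> {0..T} \<longrightarrow> norm (u t) \<le> Bu"
      using assms(1) unfolding Linf_loc_def by blast
    then obtain Nu where Nu: "\<And>t. t \<in> space lborel - Nu \<Longrightarrow> (t \<in> {0..T} \<longrightarrow> norm (u t) \<le> Bu)"
      "Nu \<in> null_sets lborel" by (rule AE_E3) blast
    obtain Bv where Bv: "AE t in lborel. t \<in> {0..T} \<longrightarrow> norm (v t) \<le> Bv"
      using assms(2) unfolding Linf_loc_def by blast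
    then obtain Nv where Nv: "\<And>t. t \<in> space lborel - Nv \<Longrightarrow> (t \<in> {0..T} \<longrightarrow> norm (v t) \<le> Bv)"
      "Nv \<in> null_sets lborel" by (rule AE_E3) blast
    have "{t. t - a \<in> Nv} \<in> null_sets lborel" by (rule null_sets_translation[OF Nv(2)])
    then have nn: "Nu \<union> {t. t - a \<in> Nv} \<in> null_sets lborel" using Nu(2) by auto
    have "AE t in lborel. t \<in> {0..T} \<longrightarrow> norm (if t < a then u t else v (t - a)) \<le> max Bu Bv"
    proof (rule AE_I'[OF nn])
      show "{t \<in> space lborel. \<not> (t \<in> {0..T} \<longrightarrow> norm (if t < a then u t else v (t - a)) \<le> max Bu Bv)}
          \<subseteq> Nu \<union> {t. t - a \<in> Nv}"
      proof
        fix t assume t: "t \<in> {t \<in> space lborel. \<not> (t \<in> {0..T} \<longrightarrow> norm (if t < a then u t else v (t - a)) \<le> max Bu Bv)}"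
        show "t \<in> Nu \<union> {t. t - a \<in> Nv}"
        proof (rule ccontr)
          assume "t \<notin> Nu \<union> {t. t - a \<in> Nv}"
          then have h1: "t \<in> space lborel - Nu" and h2: "t - a \<in> space lborel - Nv" by auto
          from Nu(1)[OF h1] Nv(1)[OF h2] t assms(3) show False
            by (auto split: if_splits)
        qed
      qed
    qed
    then show "\<exists>B. AE t in lborel. t \<in> {0..T} \<longrightarrow> norm (if t < a then u t else v (t - a)) \<le> B" by blast
  qed
qed



lemma nn_split:
  fixes h :: "real \<Rightarrow> ennreal"
  assumes m: "(\<lambda>s. h s * indicator {a..c} s) \<in> borel_measurable borel" and ab: "a \<le> b" and bc: "b \<le> c"
  shows "(\<integral>\<^sup>+ s\<in>{a..c}. h s \<partial>lborel) = (\<integral>\<^sup>+ s\<in>{a..b}. h s \<partial>lborel) + (\<integral>\<^sup>+ s\<in>{b..c}. h s \<partial>lborel)"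
proof -
  let ?H = "\<lambda>s. h s * indicator {a..c} s"
  have [measurable]: "?H \<in> borel_measurable borel" by (rule m)
  have "(\<integral>\<^sup>+ s\<in>{a..c}. h s \<partial>lborel) = (\<integral>\<^sup>+ s. ?H s * indicator {a..b} s + ?H s * indicator {b<..c} s \<partial>lborel)"
    by (rule nn_integral_cong) (use ab bc in \<open>auto split: split_indicator\<close>)
  also have "\<dots> = (\<integral>\<^sup>+ s. ?H s * indicator {a..b} s \<partial>lborel) + (\<integral>\<^sup>+ s. ?H s * indicator {b<..c} s \<partial>lborel)"
    by (rule nn_integral_add) measurable
  also have "(\<integral>\<^sup>+ s. ?H s * indicator {a..b} s \<partial>lborel) = (\<integral>\<^sup>+ s\<in>{a..b}. h s \<partial>lborel)"
    by (rule nn_integral_cong) (use ab bc in \<open>auto split: split_indicator\<close>)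
  also have "(\<integral>\<^sup>+ s. ?H s * indicator {b<..c} s \<partial>lborel) = (\<integral>\<^sup>+ s\<in>{b..c}. h s \<partial>lborel)"
  proof (rule nn_integral_cong_AE)
    show "AE s in lborel. ?H s * indicator {b<..c} s = h s * indicator {b..c} s"
      using AE_lborel_singleton[of b] by eventually_elim (use ab bc in \<open>auto split: split_indicator\<close>)
  qed
  finally show ?thesis .
qed

locale ctrl =
  fixes f :: "'a::euclidean_space \<Rightarrow> 'b::euclidean_space \<Rightarrow> 'a" and E :: "('a \<times> 'b) set"
    and l :: "'a \<Rightarrow> 'b \<Rightarrow> real"
  assumes uniq: "\<And>x0 u T x y. Linf_loc u \<Longrightarrow> is_sol f x0 u T x \<Longrightarrow> is_sol f x0 u T y
                 \<Longrightarrow> \<forall>t\<in>{0..T}. x t = y t"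
    and l_cont: "continuous_on UNIV (\<lambda>(x, u). l x u)"
    and l_nonneg: "\<And>x u. l x u \<ge> 0"
begin

lemma traj_eq: assumes "Linf_loc u" "is_sol f x0 u T x" "0 \<le> t" "t \<le> T"
  shows "traj f x0 u t = x t"
  unfolding traj_def
proof (rule the_equality)
  show "\<exists>x'. is_sol f x0 u t x' \<and> x' t = x t" using sol_restrict[OF assms(2) assms(4)] by blast
next
  fix y assume "\<exists>x'. is_sol f x0 u t x' \<and> x' t = y"
  then obtain x' where x': "is_sol f x0 u t x'" "x' t = y" by blast
  have "\<forall>s\<in>{0..t}. x' s = x s" by (rule uniq[OF assms(1) x' (1) sol_restrict[OF assms(2) assms(4)]])
  then show "y = x t" using x'(2) assms(3) by auto
qed

lemma admE: assumes "u \<in> adm f E T x0"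
  obtains x where "Linf_loc u" "is_sol f x0 u T x" "\<And>t. t \<in> {0..T} \<Longrightarrow> (x t, u t) \<in> E"
  using assms unfolding adm_def by blast

lemma adm_restrict: "u \<in> adm f E T x0 \<Longrightarrow> t \<le> T \<Longrightarrow> u \<in> adm f E t x0"
  unfolding adm_def using sol_restrict by fastforce

lemma traj_in_E: assumes "u \<in> adm f E T x0" "t \<in> {0..T}" shows "(traj f x0 u t, u t) \<in> E"
proof -
  obtain x where x: "Linf_loc u" "is_sol f x0 u T x" "\<And>t. t \<in> {0..T} \<Longrightarrow> (x t, u t) \<in> E"
    using admE[OF assms(1)] by blast
  show ?thesis using traj_eq[OF x(1,2)] x(3) assms(2) by auto
qed

lemma traj_0: assumes "u \<in> adm f E T x0" "0 \<le> T" shows "traj f x0 u 0 = x0"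
proof -
  obtain x where x: "Linf_loc u" "is_sol f x0 u T x"
    using admE[OF assms(1)] by blast
  show ?thesis using traj_eq[OF x(1,2)] sol_at0[OF x(2)] assms(2) by auto
qed

lemma adm_shift: assumes "u \<in> adm f E T x0" "0 \<le> a" "a \<le> T"
  shows "(\<lambda>t. u (t + a)) \<in> adm f E (T - a) (traj f x0 u a)"
proof -
  obtain x where x: "Linf_loc u" "is_sol f x0 u T x" "\<And>t. t \<in> {0..T} \<Longrightarrow> (x t, u t) \<in> E"
    using admE[OF assms(1)] by blast
  have "traj f x0 u a = x a" using traj_eq[OF x(1,2)] assms by auto
  then show ?thesis unfolding adm_def
    using Linf_shift[OF x(1) assms(2)] sol_shift[OF x(2) assms(2,3)] x(3) assms(2)
    by (auto intro!: exI[of _ "\<lambda>t. x (t + a)"])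
qed

lemma traj_shift: assumes "u \<in> adm f E T x0" "0 \<le> a" "a \<le> T" "0 \<le> t" "t \<le> T - a"
  shows "traj f (traj f x0 u a) (\<lambda>t. u (t + a)) t = traj f x0 u (t + a)"
proof -
  obtain x where x: "Linf_loc u" "is_sol f x0 u T x"
    using admE[OF assms(1)] by blast
  have xa: "traj f x0 u a = x a" using traj_eq[OF x(1,2)] assms by auto
  have "traj f (x a) (\<lambda>t. u (t + a)) t = x (t + a)"
    using traj_eq[OF Linf_shift[OF x(1) assms(2)] sol_shift[OF x(2) assms(2,3)]] assms by auto
  moreover have "traj f x0 u (t + a) = x (t + a)" using traj_eq[OF x(1,2)] assms by auto
  ultimately show ?thesis using xa by simp
qed

lemma adm_concat: assumes u: "u \<in> adm f E a x0" and v: "v \<in> adm f E b (traj f x0 u a)"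
    and a: "0 \<le> a" and b: "0 \<le> b"
  shows "(\<lambda>t. if t < a then u t else v (t - a)) \<in> adm f E (a + b) x0"
    and "\<And>t. 0 \<le> t \<Longrightarrow> t \<le> a \<Longrightarrow> traj f x0 (\<lambda>t. if t < a then u t else v (t - a)) t = traj f x0 u t"
    and "\<And>t. a \<le> t \<Longrightarrow> t \<le> a + b \<Longrightarrow> traj f x0 (\<lambda>t. if t < a then u t else v (t - a)) t
            = traj f (traj f x0 u a) v (t - a)"
proof -
  obtain x where x: "Linf_loc u" "is_sol f x0 u a x" "\<And>t. t \<in> {0..a} \<Longrightarrow> (x t, u t) \<in> E"
    using admE[OF u] by blast
  have xa: "traj f x0 u a = x a" using traj_eq[OF x(1,2)] a by auto
  obtain y where y: "Linf_loc v" "is_sol f (x a) v b y" "\<And>t. t \<in> {0..b} \<Longrightarrow> (y t, v t) \<in> E"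
    using admE[OF v] xa by metis
  have y0: "y 0 = x a" using sol_at0[OF y(2) b] .
  let ?w = "\<lambda>t. if t < a then u t else v (t - a)"
  let ?z = "\<lambda>t. if t \<le> a then x t else y (t - a)"
  have sol: "is_sol f x0 ?w (a + b) ?z" by (rule sol_concat[OF x(2) y(2) a b])
  have lw: "Linf_loc ?w" by (rule Linf_concat[OF x(1) y(1) a])
  have "(?z t, ?w t) \<in> E" if t: "t \<in> {0..a+b}" for t
  proof (cases "t < a")
    case True then show ?thesis using x(3) t by auto
  next
    case False
    then have "(?z t, ?w t) = (y (t - a), v (t - a))" using y0 by auto
    then show ?thesis using y(3) t False by auto
  qed
  then show "?w \<in> adm f E (a + b) x0" unfolding adm_def using sol lw by blast
  show "traj f x0 ?w t = traj f x0 u t" if "0 \<le> t" "t \<le> a" for t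
    using traj_eq[OF lw sol] traj_eq[OF x(1,2)] that b by auto
  show "traj f x0 ?w t = traj f (traj f x0 u a) v (t - a)" if "a \<le> t" "t \<le> a + b" for t
    using traj_eq[OF lw sol, of t] traj_eq[OF y(1,2), of "t - a"] that a y0 xa by auto
qed

lemma cost_meas: assumes "u \<in> adm f E T x0" "0 \<le> T"
  shows "(\<lambda>s. ennreal (l (traj f x0 u s) (u s)) * indicator {0..T} s) \<in> borel_measurable borel"
proof -
  obtain x where x: "Linf_loc u" "is_sol f x0 u T x"
    using admE[OF assms(1)] by blast
  have xc: "continuous_on {0..T} x" by (rule sol_cont[OF x(2) assms(2)])
  have "continuous_on UNIV (\<lambda>s. max 0 (min T s))" by (intro continuous_intros)
  then have "continuous_on UNIV (\<lambda>s. x (max 0 (min T s)))"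
    by (rule continuous_on_compose2[OF xc]) (use assms(2) in auto)
  then have [measurable]: "(\<lambda>s. x (max 0 (min T s))) \<in> borel_measurable borel"
    by (rule borel_measurable_continuous_onI)
  have [measurable]: "(\<lambda>t. indicator {0..} t *\<^sub>R u t) \<in> borel_measurable borel" by (rule Linf_meas[OF x(1)])
  have lc: "continuous_on UNIV (\<lambda>p. l (fst p) (snd p))" using l_cont by (simp add: case_prod_beta')
  have "(\<lambda>s. l (x (max 0 (min T s))) (indicator {0..} s *\<^sub>R u s)) \<in> borel_measurable borel"
    by (rule borel_measurable_continuous_Pair[OF _ _ lc]) measurable
  then have "(\<lambda>s. ennreal (l (x (max 0 (min T s))) (indicator {0..} s *\<^sub>R u s)) * indicator {0..T} s) \<in> borel_measurable borel"
    by measurable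
  moreover have "(\<lambda>s. ennreal (l (x (max 0 (min T s))) (indicator {0..} s *\<^sub>R u s)) * indicator {0..T} s)
     = (\<lambda>s. ennreal (l (traj f x0 u s) (u s)) * indicator {0..T} s)"
  proof
    fix s show "ennreal (l (x (max 0 (min T s))) (indicator {0..} s *\<^sub>R u s)) * indicator {0..T} s
      = ennreal (l (traj f x0 u s) (u s)) * indicator {0..T} s"
      using traj_eq[OF x(1,2), of s] by (auto split: split_indicator)
  qed
  ultimately show ?thesis by simp
qed

lemma cost_split: assumes "u \<in> adm f E T x0" "0 \<le> a" "a \<le> T"
  shows "Jcost f l T x0 u = Jcost f l a x0 u + (\<integral>\<^sup>+ s\<in>{a..T}. ennreal (l (traj f x0 u s) (u s)) \<partial>lborel)"
  unfolding Jcost_def by (rule nn_split[OF cost_meas[OF assms(1)] assms(2,3)]) (use assms in auto)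

lemma cost_meas_sub: assumes "u \<in> adm f E T x0" "0 \<le> a" "a \<le> b" "b \<le> T"
  shows "(\<lambda>s. ennreal (l (traj f x0 u s) (u s)) * indicator {a..b} s) \<in> borel_measurable borel"
proof -
  have T: "0 \<le> T" using assms by linarith
  have "(\<lambda>s. ennreal (l (traj f x0 u s) (u s)) * indicator {0..T} s * indicator {a..b} s) \<in> borel_measurable borel"
    using cost_meas[OF assms(1) T] by measurable
  moreover have "(\<lambda>s. ennreal (l (traj f x0 u s) (u s)) * indicator {0..T} s * indicator {a..b} s)
    = (\<lambda>s. ennreal (l (traj f x0 u s) (u s)) * indicator {a..b} s)"
    using assms by (auto simp: fun_eq_iff split: split_indicator)
  ultimately show ?thesis by simp
qed

lemma shift_cost: assumes u: "u \<in> adm f E T x0" and a: "0 \<le> a" "a \<le> T"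
  shows "Jcost f l (T - a) (traj f x0 u a) (\<lambda>t. u (t + a))
       = (\<integral>\<^sup>+ s\<in>{a..T}. ennreal (l (traj f x0 u s) (u s)) \<partial>lborel)"
proof -
  let ?H = "\<lambda>s. ennreal (l (traj f x0 u s) (u s)) * indicator {a..T} s"
  have [measurable]: "?H \<in> borel_measurable borel" by (rule cost_meas_sub[OF u a(1) a(2) order_refl])
  have "Jcost f l (T - a) (traj f x0 u a) (\<lambda>t. u (t + a)) = (\<integral>\<^sup>+ t. ?H (a + 1 * t) \<partial>lborel)"
    unfolding Jcost_def
  proof (rule nn_integral_cong)
    fix t
    show "ennreal (l (traj f (traj f x0 u a) (\<lambda>t. u (t + a)) t) (u (t + a))) * indicator {0..T - a} t
       = ?H (a + 1 * t)"
      using traj_shift[OF u a, of t] by (auto simp: add.commute split: split_indicator)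
  qed
  also have "\<dots> = (\<integral>\<^sup>+ s. ?H s \<partial>lborel)"
    using nn_integral_real_affine[of ?H 1 a] by simp
  finally show ?thesis .
qed

lemma concat_cost: assumes u: "u \<in> adm f E a x0" and v: "v \<in> adm f E b (traj f x0 u a)"
    and a: "0 \<le> a" and b: "0 \<le> b"
  shows "Jcost f l (a + b) x0 (\<lambda>t. if t < a then u t else v (t - a))
       = Jcost f l a x0 u + Jcost f l b (traj f x0 u a) v"
proof -
  let ?w = "\<lambda>t. if t < a then u t else v (t - a)"
  have w: "?w \<in> adm f E (a + b) x0" by (rule adm_concat(1)[OF u v a b])
  have "Jcost f l (a + b) x0 ?w = Jcost f l a x0 ?w + (\<integral>\<^sup>+ s\<in>{a..a+b}. ennreal (l (traj f x0 ?w s) (?w s)) \<partial>lborel)"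
    by (rule cost_split[OF w a]) (use b in auto)
  also have "Jcost f l a x0 ?w = Jcost f l a x0 u"
    unfolding Jcost_def
  proof (rule nn_integral_cong_AE)
    show "AE s in lborel. ennreal (l (traj f x0 ?w s) (?w s)) * indicator {0..a} s
        = ennreal (l (traj f x0 u s) (u s)) * indicator {0..a} s"
      using AE_lborel_singleton[of a]
    proof eventually_elim
      case (elim s)
      then show ?case using adm_concat(2)[OF u v a b, of s] by (auto split: split_indicator)
    qed
  qed
  also have "(\<integral>\<^sup>+ s\<in>{a..a+b}. ennreal (l (traj f x0 ?w s) (?w s)) \<partial>lborel)
      = Jcost f l (a + b - a) (traj f x0 ?w a) (\<lambda>t. ?w (t + a))"
    by (rule shift_cost[OF w a, symmetric]) (use b in auto)
  also have "\<dots> = Jcost f l b (traj f x0 u a) v"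
    unfolding Jcost_def
  proof (rule nn_integral_cong)
    fix t
    have wa: "traj f x0 ?w a = traj f x0 u a" using adm_concat(2)[OF u v a b, of a] a by auto
    show "ennreal (l (traj f (traj f x0 ?w a) (\<lambda>t. ?w (t + a)) t) (?w (t + a))) * indicator {0..a + b - a} t
       = ennreal (l (traj f (traj f x0 u a) v t) (v t)) * indicator {0..b} t"
    proof (cases "t \<in> {0..b}")
      case True
      have "traj f (traj f x0 ?w a) (\<lambda>t. ?w (t + a)) t = traj f x0 ?w (t + a)"
        by (rule traj_shift[OF w a]) (use True b in auto)
      also have "\<dots> = traj f (traj f x0 u a) v t"
        using adm_concat(3)[OF u v a b, of "t + a"] True by auto
      finally show ?thesis using True wa by auto
    next
      case False then show ?thesis by auto
    qed
  qed
  finally show ?thesis .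
qed

lemma V_le: "u \<in> adm f E T x0 \<Longrightarrow> Vfun f E l T x0 \<le> Jcost f l T x0 u"
  unfolding Vfun_def by (rule INF_lower)

lemma adm_inf_adm: "v \<in> adm_inf f E x0 \<Longrightarrow> 0 \<le> T \<Longrightarrow> v \<in> adm f E T x0"
  unfolding adm_def adm_inf_def by blast

lemma Jcost_le_inf: "Jcost f l T x0 v \<le> Jcost_inf f l x0 v"
  unfolding Jcost_def Jcost_inf_def
  by (intro nn_integral_mono) (auto split: split_indicator)

lemma Jcost_mono: "a \<le> T \<Longrightarrow> Jcost f l a x0 v \<le> Jcost f l T x0 v"
  unfolding Jcost_def
  by (intro nn_integral_mono) (auto split: split_indicator)

lemma V_le_Vinf: "0 \<le> T \<Longrightarrow> Vfun f E l T x0 \<le> Vfun_inf f E l x0"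
  unfolding Vfun_def Vfun_inf_def
  by (rule INF_mono) (use adm_inf_adm Jcost_le_inf in blast)

end


lemma ellstar_le: assumes "(x, v) \<in> E" "\<And>x u. l x u \<ge> (0::real)" shows "ellstar E l x \<le> l x v"
  unfolding ellstar_def
proof (rule cInf_lower)
  show "l x v \<in> l x ` Uset E x" using assms(1) by (auto simp: Uset_def)
  show "bdd_below (l x ` Uset E x)" using assms(2) by (auto intro!: bdd_belowI[of _ 0])
qed

lemma ellstar_nonneg: assumes "x \<in> Xset E" "\<And>x u. l x u \<ge> (0::real)" shows "0 \<le> ellstar E l x"
  unfolding ellstar_def
proof (rule cInf_greatest)
  show "l x ` Uset E x \<noteq> {}" using assms(1) by (auto simp: Xset_def)
  show "\<And>y. y \<in> l x ` Uset E x \<Longrightarrow> 0 \<le> y" using assms(2) by auto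
qed

lemma decay_step_real:
  fixes wa wb Ir beta delta :: real
  assumes "delta * wb \<le> beta * Ir" "wa = Ir + wb" "0 < beta" "0 < delta"
  shows "wb \<le> beta / (beta + delta) * wa"
proof -
  have "(beta + delta) * wb \<le> beta * wa" using assms by (simp add: algebra_simps)
  then show ?thesis using assms by (simp add: field_simps)
qed

theorem theorem1:
  fixes f :: "real^'n \<Rightarrow> real^'m \<Rightarrow> real^'n"
    and E :: "((real^'n) \<times> (real^'m)) set"
    and l :: "real^'n \<Rightarrow> real^'m \<Rightarrow> real"
    and xbar :: "real^'n" and ubar :: "real^'m"
    and C gamma delta Cbar CM beta alpha :: real
    and Nset :: "(real^'n) set"
    and N :: nat
    and eta1 eta2 :: "real \<Rightarrow> real"
  assumes f_cont: "continuous_on UNIV (\<lambda>(x, u). f x u)"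
    and f_lip: "local_lipschitz UNIV (- {0}) (\<lambda>u x. f x u)"
    and uniq: "\<And>x0 u T x y. Linf_loc u \<Longrightarrow> is_sol f x0 u T x \<Longrightarrow> is_sol f x0 u T y
                 \<Longrightarrow> \<forall>t\<in>{0..T}. x t = y t"
    and l_cont: "continuous_on UNIV (\<lambda>(x, u). l x u)"
    and l_nonneg: "\<And>x u. l x u \<ge> 0"
    and minimiser_exists: "\<And>T x0. T > 0 \<Longrightarrow> x0 \<in> Xset E \<Longrightarrow> adm f E T x0 \<noteq> {} \<Longrightarrow>
                 \<exists>u\<in>adm f E T x0. Jcost f l T x0 u = Vfun f E l T x0"
    and equil: "xbar \<in> Xset E" "ubar \<in> Uset E xbar" "f xbar ubar = 0"
    and C_pos: "C > 0"
    and A1: "class_K_inf eta1" "class_K_inf eta2"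
            "\<And>x. x \<in> Xset E \<Longrightarrow> eta1 (norm (x - xbar)) \<le> ellstar E l x
                  \<and> ellstar E l x \<le> eta2 (norm (x - xbar))"
    and A2: "gamma > 0" "xbar \<in> interior Nset"
            "\<And>x. x \<in> Nset \<inter> Xset E \<Longrightarrow> Vfun_inf f E l x \<le> ennreal (gamma * ellstar E l x)"
    and CM_def: "CM = (if Xset E - Nset = {} then 0
                       else C / Inf (ellstar E l ` (Xset E - Nset)))"
    and beta_def: "beta = max CM gamma"
    and delta: "0 < delta" "delta < beta"
    and N_pos: "N \<ge> 1"
    and A3: "Cbar > 0"
            "\<And>d xh. d \<in> {0<..real N * delta} \<Longrightarrow> xh \<in> sublevel f E l (real N * delta) C \<Longrightarrow>
                 ennreal (d * ellstar E l xh) \<le> ennreal Cbar * Vfun f E l d xh"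
    and cond: "max (CM / delta) (Cbar * (beta / delta)^2) * (beta / (beta + delta)) ^ (N - 1) < 1"
    and alpha_def: "alpha = Cbar * (beta / delta)^2 * (beta / (beta + delta)) ^ (N - 1)"
  shows "\<forall>xh \<in> sublevel f E l (real N * delta) C. \<forall>ustar \<in> adm f E (real N * delta) xh.
           Jcost f l (real N * delta) xh ustar = Vfun f E l (real N * delta) xh \<longrightarrow>
           Vfun f E l (real N * delta) (traj f xh ustar delta)
             + ennreal (1 - alpha) * (\<integral>\<^sup>+ s \<in> {0..delta}. ennreal (l (traj f xh ustar s) (ustar s)) \<partial>lborel)
           \<le> Vfun f E l (real N * delta) xh"
proof (intro ballI impI)
  interpret ctrl f E l using uniq l_cont l_nonneg by unfold_locales auto
  fix xh ustar
  assume xh0: "xh \<in> sublevel f E l (real N * delta) C"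
    and us0: "ustar \<in> adm f E (real N * delta) xh"
    and opt0: "Jcost f l (real N * delta) xh ustar = Vfun f E l (real N * delta) xh"
  define T where "T = real N * delta"
  have us: "ustar \<in> adm f E T xh" using us0 by (simp add: T_def)
  have opt: "Jcost f l T xh ustar = Vfun f E l T xh" using opt0 by (simp add: T_def)
  have dpos: "0 < delta" using delta by simp
  have N1: "1 \<le> real N" using N_pos by simp
  have Tge: "delta \<le> T" using mult_right_mono[OF N1, of delta] dpos by (simp add: T_def)
  have T0: "0 \<le> T" using Tge dpos by simp
  have gpos: "0 < gamma" using A2(1) .
  have beta_ge: "gamma \<le> beta" "CM \<le> beta" using beta_def by auto
  have bpos: "0 < beta" using gpos beta_ge by simp
  have xhX: "xh \<in> Xset E" and VC: "Vfun f E l T xh \<le> ennreal C" using xh0 by (auto simp: sublevel_def T_def)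
  define g where "g s = l (traj f xh ustar s) (ustar s)" for s
  have g0: "\<And>s. 0 \<le> g s" using l_nonneg by (simp add: g_def)
  define W where "W s = (\<integral>\<^sup>+ r\<in>{s..T}. ennreal (g r) \<partial>lborel)" for s
  have W0: "W 0 = Vfun f E l T xh" using opt by (simp add: W_def Jcost_def g_def)
  have WC: "W 0 \<le> ennreal C" using W0 VC by simp
  have Wmono: "W b \<le> W a" if "a \<le> b" for a b
    unfolding W_def using that by (intro nn_integral_mono) (auto split: split_indicator)
  have WsC: "W s \<le> ennreal C" if "0 \<le> s" for s
    using Wmono[OF that] WC by (rule order.trans)
  have Wfin: "W s < top" if "0 \<le> s" for s
    using WsC[OF that] ennreal_less_top le_less_trans by blast
  have meas: "(\<lambda>r. ennreal (g r) * indicator {a..b} r) \<in> borel_measurable borel"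
    if "0 \<le> a" "a \<le> b" "b \<le> T" for a b
    unfolding g_def by (rule cost_meas_sub[OF us that])
  have Wsplit: "W a = (\<integral>\<^sup>+ r\<in>{a..b}. ennreal (g r) \<partial>lborel) + W b" if "0 \<le> a" "a \<le> b" "b \<le> T" for a b
    unfolding W_def by (rule nn_split[OF meas[of a T]]) (use that in auto)
  have Jsplit: "Jcost f l T xh ustar = Jcost f l s xh ustar + W s" if "0 \<le> s" "s \<le> T" for s
    unfolding W_def g_def by (rule cost_split[OF us that])
  have JsC: "Jcost f l s xh ustar < top" if "0 \<le> s" "s \<le> T" for s
  proof -
    have "Jcost f l s xh ustar \<le> Jcost f l T xh ustar" by (rule Jcost_mono[OF that(2)])
    also have "\<dots> \<le> ennreal C" using opt W0 WC by simp
    finally show ?thesis using ennreal_less_top le_less_trans by blast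
  qed
  have Wopt: "W s \<le> Vfun f E l (T - s) (traj f xh ustar s)" if s: "0 \<le> s" "s \<le> T" for s
    unfolding Vfun_def
  proof (rule INF_greatest)
    fix v assume v: "v \<in> adm f E (T - s) (traj f xh ustar s)"
    have us_s: "ustar \<in> adm f E s xh" by (rule adm_restrict[OF us s(2)])
    have w: "(\<lambda>t. if t < s then ustar t else v (t - s)) \<in> adm f E (s + (T - s)) xh"
      by (rule adm_concat(1)[OF us_s v]) (use s in auto)
    have "Vfun f E l T xh \<le> Jcost f l (s + (T - s)) xh (\<lambda>t. if t < s then ustar t else v (t - s))"
      using V_le[OF w] by simp
    also have "\<dots> = Jcost f l s xh ustar + Jcost f l (T - s) (traj f xh ustar s) v"
      by (rule concat_cost[OF us_s v]) (use s in auto)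
    finally have "Jcost f l s xh ustar + W s \<le> Jcost f l s xh ustar + Jcost f l (T - s) (traj f xh ustar s) v"
      using Jsplit[OF s] opt by simp
    then show "W s \<le> Jcost f l (T - s) (traj f xh ustar s) v"
      using JsC[OF s] by (auto simp: ennreal_add_left_cancel_le)
  qed
  have trajE: "(traj f xh ustar s, ustar s) \<in> E" if "0 \<le> s" "s \<le> T" for s
    using traj_in_E[OF us] that by auto
  have trajX: "traj f xh ustar s \<in> Xset E" if "0 \<le> s" "s \<le> T" for s
    using trajE[OF that] by (auto simp: Xset_def Uset_def)
  have ell_g: "ellstar E l (traj f xh ustar s) \<le> g s" if "0 \<le> s" "s \<le> T" for s
    unfolding g_def by (rule ellstar_le[OF trajE[OF that] l_nonneg])
  have ell0: "0 \<le> ellstar E l x" if "x \<in> Xset E" for x by (rule ellstar_nonneg[OF that l_nonneg])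
  obtain eps where eps: "eps > 0" "ball xbar eps \<subseteq> Nset" using A2(2) mem_interior by blast
  have K1: "strict_mono_on {0..} eta1" "eta1 0 = 0" using A1(1) by (auto simp: class_K_inf_def)
  have eta1_pos: "0 < eta1 r" if "0 < r" for r using strict_mono_onD[OF K1(1), of 0 r] that K1(2) by auto
  have eta1_mono: "eta1 r \<le> eta1 s" if "0 \<le> r" "r \<le> s" for r s
    using strict_mono_on_leD[OF K1(1)] that by auto
  have ell_far: "eta1 eps \<le> ellstar E l x" if "x \<in> Xset E - Nset" for x
  proof -
    have "x \<notin> ball xbar eps" using that eps(2) by auto
    then have "eps \<le> norm (x - xbar)" by (simp add: dist_norm norm_minus_commute)
    then have "eta1 eps \<le> eta1 (norm (x - xbar))" using eta1_mono eps(1) by simp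
    also have "\<dots> \<le> ellstar E l x" using A1(3)[of x] that by auto
    finally show ?thesis .
  qed
  define Mi where "Mi = Inf (ellstar E l ` (Xset E - Nset))"
  have Mi: "0 < Mi" "\<And>x. x \<in> Xset E - Nset \<Longrightarrow> Mi \<le> ellstar E l x" "CM = C / Mi" if ne: "Xset E - Nset \<noteq> {}"
  proof -
    have "eta1 eps \<le> Mi" unfolding Mi_def by (rule cInf_greatest) (use ne ell_far in auto)
    then show "0 < Mi" using eta1_pos[OF eps(1)] by simp
    show "Mi \<le> ellstar E l x" if "x \<in> Xset E - Nset" for x
      unfolding Mi_def by (rule cInf_lower) (use that ell_far in \<open>auto intro!: bdd_belowI[of _ "eta1 eps"]\<close>)
    show "CM = C / Mi" using CM_def ne by (simp add: Mi_def)
  qed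
  have CM0: "0 \<le> CM" using CM_def Mi C_pos by (cases "Xset E - Nset = {}") auto
  have Wbound: "W s \<le> ennreal (beta * ellstar E l (traj f xh ustar s))" if s: "0 \<le> s" "s \<le> T" for s
  proof (cases "traj f xh ustar s \<in> Nset")
    case True
    have "W s \<le> Vfun f E l (T - s) (traj f xh ustar s)" by (rule Wopt[OF s])
    also have "\<dots> \<le> Vfun_inf f E l (traj f xh ustar s)" by (rule V_le_Vinf) (use s in auto)
    also have "\<dots> \<le> ennreal (gamma * ellstar E l (traj f xh ustar s))" using A2(3) True trajX[OF s] by auto
    also have "\<dots> \<le> ennreal (beta * ellstar E l (traj f xh ustar s))"
      using beta_ge ell0[OF trajX[OF s]] by (intro ennreal_leI mult_right_mono) auto
    finally show ?thesis .
  next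
    case False
    then have ne: "Xset E - Nset \<noteq> {}" and mem: "traj f xh ustar s \<in> Xset E - Nset" using trajX[OF s] by auto
    have "C = CM * Mi" using Mi[OF ne] by simp
    also have "CM * Mi \<le> beta * ellstar E l (traj f xh ustar s)"
    proof (rule mult_mono)
      show "CM \<le> beta" by (rule beta_ge(2))
      show "Mi \<le> ellstar E l (traj f xh ustar s)" by (rule Mi(2)[OF ne mem])
      show "0 \<le> beta" using bpos by (rule less_imp_le)
      show "0 \<le> Mi" using Mi(1)[OF ne] by (rule less_imp_le)
    qed
    finally have Creal: "C \<le> beta * ellstar E l (traj f xh ustar s)" .
    show ?thesis using WsC[OF s(1)] ennreal_leI[OF Creal] by (rule order.trans)
  qed
  have Wg: "W s \<le> ennreal beta * ennreal (g s)" if s: "0 \<le> s" "s \<le> T" for s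
  proof -
    have "W s \<le> ennreal (beta * ellstar E l (traj f xh ustar s))" by (rule Wbound[OF s])
    also have "\<dots> \<le> ennreal (beta * g s)" using ell_g[OF s] bpos by (intro ennreal_leI mult_left_mono) auto
    finally show ?thesis using bpos g0 by (simp add: ennreal_mult)
  qed
  define w where "w s = enn2real (W s)" for s
  have Ww: "W s = ennreal (w s)" if "0 \<le> s" for s using Wfin[OF that] by (simp add: w_def)
  have w0: "0 \<le> w s" for s by (simp add: w_def)
  define rho where "rho = beta / (beta + delta)"
  have rho0: "0 \<le> rho" using bpos dpos by (simp add: rho_def)
  have step: "w (a + delta) \<le> rho * w a" if a: "0 \<le> a" "a + delta \<le> T" for a
  proof -
    define I where "I = (\<integral>\<^sup>+ r\<in>{a..a + delta}. ennreal (g r) \<partial>lborel)"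
    have split: "W a = I + W (a + delta)" unfolding I_def by (rule Wsplit) (use a dpos in auto)
    have "I \<le> W a" using split by simp
    then have Ifin: "I < top" using Wfin[OF a(1)] by (rule le_less_trans)
    have "ennreal delta * W (a + delta) = (\<integral>\<^sup>+ r. W (a + delta) * indicator {a..a + delta} r \<partial>lborel)"
      using dpos by (simp add: nn_integral_cmult_indicator mult.commute)
    also have "\<dots> \<le> (\<integral>\<^sup>+ r\<in>{a..a + delta}. W r \<partial>lborel)"
      by (intro nn_integral_mono) (auto split: split_indicator intro: Wmono)
    also have "\<dots> \<le> (\<integral>\<^sup>+ r\<in>{a..a + delta}. ennreal beta * ennreal (g r) \<partial>lborel)"
      by (intro nn_integral_mono) (use Wg a dpos in \<open>auto split: split_indicator\<close>)
    also have "\<dots> = ennreal beta * I"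
      unfolding I_def using meas[of a "a + delta"] a dpos
      by (simp add: mult.assoc nn_integral_cmult)
    finally have ineq: "ennreal delta * W (a + delta) \<le> ennreal beta * I" .
    define Ir where "Ir = enn2real I"
    have IIr: "I = ennreal Ir" using Ifin by (simp add: Ir_def)
    have Ir0: "0 \<le> Ir" by (simp add: Ir_def)
    have e1: "ennreal (delta * w (a + delta)) = ennreal delta * W (a + delta)"
      using Ww[of "a + delta"] a dpos w0[of "a + delta"] by (simp add: ennreal_mult)
    have e2: "ennreal (beta * Ir) = ennreal beta * I"
      unfolding IIr using bpos Ir0 by (simp add: ennreal_mult)
    have "ennreal (delta * w (a + delta)) \<le> ennreal (beta * Ir)"
      unfolding e1 e2 by (rule ineq)
    then have r1: "delta * w (a + delta) \<le> beta * Ir" using bpos Ir0 by (simp add: ennreal_le_iff)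
    have "ennreal (w a) = ennreal (Ir + w (a + delta))"
      using split Ww[of a] Ww[of "a + delta"] a dpos IIr Ir0 w0 by (simp add: ennreal_plus)
    then have r2: "w a = Ir + w (a + delta)" using Ir0 w0 by (metis ennreal_inj add_nonneg_nonneg)
    show ?thesis unfolding rho_def by (rule decay_step_real[OF r1 r2 bpos dpos])
  qed
  have decay: "w (real k * delta) \<le> rho ^ k * w 0" if "real k * delta \<le> T" for k
    using that
  proof (induction k)
    case 0 then show ?case by simp
  next
    case (Suc k)
    have hk: "real k * delta \<le> T" using Suc.prems dpos by (simp add: algebra_simps)
    have "w (real (Suc k) * delta) = w (real k * delta + delta)" by (simp add: algebra_simps)
    also have "\<dots> \<le> rho * w (real k * delta)"
      by (rule step) (use Suc.prems dpos in \<open>auto simp: algebra_simps\<close>)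
    also have "\<dots> \<le> rho * (rho ^ k * w 0)" by (intro mult_left_mono Suc.IH hk rho0)
    finally show ?case by (simp add: algebra_simps)
  qed
  define K where "K = N - 1"
  have TK: "real K * delta = T - delta" using N_pos by (simp add: K_def T_def of_nat_diff algebra_simps)
  have wK: "w (T - delta) \<le> rho ^ K * w 0" using decay[of K] TK dpos by simp
  define c where "c = w (T - delta) / delta"
  have c0: "0 \<le> c" using w0 dpos by (simp add: c_def)
  define I0 where "I0 = (\<integral>\<^sup>+ s\<in>{0..delta}. ennreal (g s) \<partial>lborel)"
  have W0split: "W 0 = I0 + W delta" unfolding I0_def by (rule Wsplit) (use dpos Tge in auto)
  have "I0 \<le> W 0" using W0split by simp
  then have I0fin: "I0 < top" using Wfin[of 0] by (simp add: le_less_trans)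
  define Ir where "Ir = enn2real I0"
  have I0r: "I0 = ennreal Ir" using I0fin by (simp add: Ir_def)
  have Ir0: "0 \<le> Ir" by (simp add: Ir_def)
  have w0split: "w 0 = Ir + w delta"
  proof -
    have "ennreal (w 0) = ennreal (Ir + w delta)"
      using W0split Ww[of 0] Ww[of delta] dpos I0r Ir0 w0 by (simp add: ennreal_plus)
    then show ?thesis using Ir0 w0 by (metis ennreal_inj add_nonneg_nonneg)
  qed
  have J_delta: "Jcost f l delta xh ustar = I0" by (simp add: Jcost_def I0_def g_def)
  have A3': "delta * ellstar E l xh \<le> Cbar * Ir"
  proof -
    have "ennreal (delta * ellstar E l xh) \<le> ennreal Cbar * Vfun f E l delta xh"
      using A3(2)[of delta xh] dpos Tge xh0 by (auto simp: T_def)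
    also have "\<dots> \<le> ennreal Cbar * I0"
      using V_le[OF adm_restrict[OF us Tge]] J_delta by (intro mult_left_mono) auto
    also have "\<dots> = ennreal (Cbar * Ir)" using A3(1) Ir0 I0r by (simp add: ennreal_mult)
    finally show ?thesis using A3(1) Ir0 by (simp add: ennreal_le_iff)
  qed
  have xh_0: "traj f xh ustar 0 = xh" by (rule traj_0[OF us T0])
  have w0b: "w 0 \<le> beta * ellstar E l xh"
  proof -
    have "ennreal (w 0) \<le> ennreal (beta * ellstar E l xh)"
      using Wbound[of 0] T0 xh_0 Ww[of 0] by simp
    then show ?thesis using bpos ell0[OF xhX] by (simp add: ennreal_le_iff)
  qed
  have alpha_eq: "alpha = Cbar * (beta / delta)^2 * rho ^ K" using alpha_def by (simp add: rho_def K_def)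
  have alpha0: "0 \<le> alpha" using alpha_eq A3(1) rho0 by simp
  have condK: "max (CM / delta) (Cbar * (beta / delta)^2) * rho ^ K < 1"
    using cond by (simp add: rho_def K_def)
  have alpha1: "alpha < 1"
  proof -
    have "alpha \<le> max (CM / delta) (Cbar * (beta / delta)^2) * rho ^ K"
      unfolding alpha_eq using rho0 by (intro mult_right_mono) auto
    also have "\<dots> < 1" by (rule condK)
    finally show ?thesis .
  qed
  have key: "gamma * c \<le> alpha * Ir"
  proof -
    have "c \<le> rho ^ K * w 0 / delta" using wK dpos by (simp add: c_def divide_right_mono)
    also have "\<dots> \<le> rho ^ K * (beta * ellstar E l xh) / delta"
      using w0b rho0 dpos by (intro divide_right_mono mult_left_mono) auto
    also have "\<dots> \<le> rho ^ K * (beta * (Cbar * Ir / delta)) / delta"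
    proof -
      have "ellstar E l xh \<le> Cbar * Ir / delta" using A3' dpos by (simp add: field_simps)
      then show ?thesis using rho0 bpos dpos by (intro divide_right_mono mult_left_mono) auto
    qed
    finally have cle: "c \<le> rho ^ K * (beta * (Cbar * Ir / delta)) / delta" .
    have "gamma * c \<le> beta * c" using beta_ge c0 by (intro mult_right_mono) auto
    also have "\<dots> \<le> beta * (rho ^ K * (beta * (Cbar * Ir / delta)) / delta)"
      using cle bpos by (intro mult_left_mono) auto
    also have "\<dots> = alpha * Ir" using alpha_eq dpos by (simp add: power2_eq_square field_simps)
    finally show ?thesis .
  qed
  have main: "Vfun f E l T (traj f xh ustar delta) \<le> W delta + ennreal (alpha * Ir)"
  proof (cases "N = 1")
    case True
    have Td: "T = delta" using True by (simp add: T_def)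
    have KK: "K = 0" using True by (simp add: K_def)
    have ellxh0: "ellstar E l xh = 0"
    proof (rule ccontr)
      assume "ellstar E l xh \<noteq> 0"
      then have pos: "0 < ellstar E l xh" using ell0[OF xhX] by simp
      have Irw: "Ir \<le> w 0" using w0split w0 by simp
      have "Cbar * Ir \<le> Cbar * (beta * ellstar E l xh)"
        using Irw w0b A3(1) by (intro mult_left_mono) auto
      then have "delta * ellstar E l xh \<le> (Cbar * beta) * ellstar E l xh"
        using A3' by (simp add: mult.assoc)
      then have dC: "delta \<le> Cbar * beta" using pos by simp
      have "Cbar * (beta / delta)^2 < 1" using condK KK by simp
      then have c1: "Cbar * beta * beta < delta * delta" using dpos by (simp add: power2_eq_square field_simps)
      have "delta * delta \<le> Cbar * beta * delta" using dC dpos by (intro mult_right_mono) auto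
      also have "\<dots> < Cbar * beta * beta" using delta(2) A3(1) bpos by simp
      finally show False using c1 by simp
    qed
    have W0z: "W 0 = 0"
    proof -
      have "w 0 \<le> 0" using w0b ellxh0 by simp
      then have "w 0 = 0" using w0[of 0] by simp
      then show ?thesis using Ww[of 0] by simp
    qed
    obtain x where x: "Linf_loc ustar" "is_sol f xh ustar T x" using admE[OF us] by blast
    have xc: "continuous_on {0..T} x" by (rule sol_cont[OF x(2) T0])
    have tx: "traj f xh ustar s = x s" if "0 \<le> s" "s \<le> T" for s using traj_eq[OF x that] .
    have gzero: "\<exists>s. p \<le> s \<and> s \<le> delta \<and> g s = 0" if p: "0 \<le> p" "p < delta" for p
    proof (rule ccontr)
      assume nz: "\<not> (\<exists>s. p \<le> s \<and> s \<le> delta \<and> g s = 0)"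
      have "(\<integral>\<^sup>+ r\<in>{p..delta}. ennreal (g r) \<partial>lborel) \<le> W 0"
        unfolding W_def using Td p by (intro nn_integral_mono) (auto split: split_indicator)
      then have int0: "(\<integral>\<^sup>+ r\<in>{p..delta}. ennreal (g r) \<partial>lborel) = 0" using W0z by simp
      have mm: "(\<lambda>r. ennreal (g r) * indicator {p..delta} r) \<in> borel_measurable lborel"
        using meas[of p delta] p Td by simp
      have "AE r in lborel. ennreal (g r) * indicator {p..delta} r = 0"
        using int0 nn_integral_0_iff_AE[OF mm] by simp
      then have ae: "AE r in lborel. r \<notin> {p..delta}"
      proof eventually_elim
        case (elim r)
        show ?case
        proof
          assume r: "r \<in> {p..delta}"
          then have "g r \<noteq> 0" using nz by auto
          then have "0 < g r" using g0[of r] by simp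
          then show False using elim r by (simp add: indicator_def)
        qed
      qed
      have eqs: "{r \<in> space lborel. \<not> r \<notin> {p..delta}} = {p..delta}" by auto
      have "emeasure lborel {p..delta} = 0"
        using AE_iff_measurable[OF _ eqs] ae by auto
      then show False using p by simp
    qed
    have xs_bar: "x s = xbar" if s: "0 \<le> s" "s \<le> T" "g s = 0" for s
    proof -
      have "ellstar E l (x s) \<le> 0" using ell_g[OF s(1,2)] s(3) tx[OF s(1,2)] by simp
      moreover have xsX: "x s \<in> Xset E" using trajX[OF s(1,2)] tx[OF s(1,2)] by simp
      moreover have "eta1 (norm (x s - xbar)) \<le> ellstar E l (x s)" using A1(3)[OF xsX] by blast
      ultimately have "eta1 (norm (x s - xbar)) \<le> 0" by linarith
      then have "\<not> 0 < norm (x s - xbar)" using eta1_pos[of "norm (x s - xbar)"] by linarith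
      then show ?thesis by simp
    qed
    have xd: "x delta = xbar"
    proof -
      have "dist (x delta) xbar < e" if e: "0 < e" for e
      proof -
        have "delta \<in> {0..T}" using Td dpos by simp
        then obtain d where d: "d > 0" "\<And>y. y \<in> {0..T} \<Longrightarrow> dist y delta < d \<Longrightarrow> dist (x y) (x delta) < e"
          using xc e unfolding continuous_on_iff by metis
        define p where "p = max 0 (delta - d / 2)"
        have p: "0 \<le> p" "p < delta" using d dpos by (auto simp: p_def)
        obtain s where s: "p \<le> s" "s \<le> delta" "g s = 0" using gzero[OF p] by blast
        have "dist s delta < d" using s d by (auto simp: p_def dist_real_def)
        then have "dist (x s) (x delta) < e" using d(2)[of s] s p Td by auto
        moreover have "x s = xbar" using xs_bar[of s] s p Td by auto
        ultimately show ?thesis by (simp add: dist_commute)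
      qed
      then have "\<not> 0 < dist (x delta) xbar" by (meson less_irrefl)
      then show ?thesis by simp
    qed
    have trd: "traj f xh ustar delta = xbar" using tx[of delta] xd Td dpos by simp
    have xbarN: "xbar \<in> Nset" using A2(2) interior_subset by blast
    have "ellstar E l xbar \<le> eta2 (norm (xbar - xbar))" using A1(3)[OF equil(1)] by blast
    then have ellbar: "ellstar E l xbar = 0"
      using A1(2) ell0[OF equil(1)] by (simp add: class_K_inf_def)
    have "Vfun f E l T xbar \<le> Vfun_inf f E l xbar" by (rule V_le_Vinf[OF T0])
    also have "\<dots> \<le> ennreal (gamma * ellstar E l xbar)" using A2(3) xbarN equil(1) by auto
    also have "\<dots> = 0" using ellbar by simp
    finally show ?thesis using trd by simp

  next
    case False
    then have N2: "2 \<le> real N" using N_pos by simp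
    have dTK: "delta \<le> T - delta" using mult_right_mono[OF N2, of delta] dpos by (simp add: T_def)
    show ?thesis
    proof (rule ennreal_le_epsilon)
      fix e :: real assume e: "0 < e"
      define eps' where "eps' = e / (2 * gamma)"
      have eps'0: "0 < eps'" using e gpos by (simp add: eps'_def)
      have wC: "w 0 \<le> C" using WC Ww[of 0] C_pos by (simp add: ennreal_le_iff)
      have cMi: "c < Mi" if ne: "Xset E - Nset \<noteq> {}"
      proof -
        have "c \<le> rho ^ K * w 0 / delta" using wK dpos by (simp add: c_def divide_right_mono)
        also have "\<dots> \<le> rho ^ K * C / delta" using wC rho0 dpos by (intro divide_right_mono mult_left_mono) auto
        also have "\<dots> < Mi"
        proof -
          have "CM / delta * rho ^ K < 1"
            using condK rho0 le_less_trans[OF mult_right_mono[OF max.cobounded1 zero_le_power[OF rho0]]] by blast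
          then have "C / Mi / delta * rho ^ K < 1" using Mi(3)[OF ne] by simp
          then show ?thesis using Mi(1)[OF ne] dpos by (simp add: field_simps)
        qed
        finally show ?thesis .
      qed
      define c' where "c' = (if Xset E - Nset = {} then c + eps' else min (c + eps') ((c + Mi) / 2))"
      have c'gt: "c < c'" using eps'0 cMi by (auto simp: c'_def)
      have c'le: "c' \<le> c + eps'" by (auto simp: c'_def)
      have c'Mi: "c' < Mi" if "Xset E - Nset \<noteq> {}"
      proof -
        have ceq: "c' = min (c + eps') ((c + Mi) / 2)" using that by (simp add: c'_def)
        have c1: "c' \<le> (c + Mi) / 2" unfolding ceq by (rule min.cobounded2)
        from c1 cMi[OF that] show ?thesis by argo
      qed
      have "\<exists>s. T - delta \<le> s \<and> s \<le> T \<and> g s \<le> c'"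
      proof (rule ccontr)
        assume nz: "\<not> (\<exists>s. T - delta \<le> s \<and> s \<le> T \<and> g s \<le> c')"
        have "ennreal (c' * delta) = (\<integral>\<^sup>+ r. ennreal c' * indicator {T - delta..T} r \<partial>lborel)"
          using dpos c'gt c0 by (simp add: nn_integral_cmult_indicator ennreal_mult)
        also have "\<dots> \<le> (\<integral>\<^sup>+ r\<in>{T - delta..T}. ennreal (g r) \<partial>lborel)"
        proof (intro nn_integral_mono)
          fix r show "ennreal c' * indicator {T - delta..T} r \<le> ennreal (g r) * indicator {T - delta..T} r"
            using nz by (auto split: split_indicator intro!: ennreal_leI)
        qed
        also have "\<dots> = W (T - delta)" by (simp add: W_def)
        also have "\<dots> = ennreal (w (T - delta))" using Ww[of "T - delta"] dTK dpos by simp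
        finally have "c' * delta \<le> w (T - delta)" using w0 by (simp add: ennreal_le_iff)
        also have "w (T - delta) = c * delta" using dpos by (simp add: c_def)
        finally show False using c'gt dpos by simp
      qed
      then obtain s where s: "T - delta \<le> s" "s \<le> T" "g s \<le> c'" by blast
      let ?xs = "traj f xh ustar s"
      have s0: "0 \<le> s" "delta \<le> s" using s dTK dpos by auto
      have xsX: "?xs \<in> Xset E" by (rule trajX) (use s s0 in auto)
      have ell_xs: "ellstar E l ?xs \<le> c'" using ell_g[of s] s s0 by auto
      have xsN: "?xs \<in> Nset"
      proof (rule ccontr)
        assume "?xs \<notin> Nset"
        then have ne: "Xset E - Nset \<noteq> {}" and m: "?xs \<in> Xset E - Nset" using xsX by auto
        show False using Mi(2)[OF ne m] ell_xs c'Mi[OF ne] by simp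
      qed
      have "Vfun_inf f E l ?xs \<le> ennreal (gamma * ellstar E l ?xs)" using A2(3) xsN xsX by auto
      also have "\<dots> \<le> ennreal (gamma * c')" using ell_xs gpos by (intro ennreal_leI mult_left_mono) auto
      finally have Vinf: "Vfun_inf f E l ?xs \<le> ennreal (gamma * c')" .
      have Vfin: "Vfun_inf f E l ?xs \<noteq> top" using Vinf by (metis ennreal_neq_top neq_top_trans)
      have "Vfun_inf f E l ?xs + 0 < Vfun_inf f E l ?xs + ennreal (e/2)"
        using Vfin e by (subst ennreal_add_left_cancel_less) auto
      then have "(INF v \<in> adm_inf f E ?xs. Jcost_inf f l ?xs v) < Vfun_inf f E l ?xs + ennreal (e/2)"
        by (simp add: Vfun_inf_def)
      then obtain v where v: "v \<in> adm_inf f E ?xs" "Jcost_inf f l ?xs v < Vfun_inf f E l ?xs + ennreal (e/2)"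
        by (auto simp: INF_less_iff)
      let ?xd = "traj f xh ustar delta"
      let ?u1 = "\<lambda>t. ustar (t + delta)"
      have us_s: "ustar \<in> adm f E s xh" by (rule adm_restrict[OF us s(2)])
      have u1: "?u1 \<in> adm f E (s - delta) ?xd" by (rule adm_shift[OF us_s]) (use dpos s0 in auto)
      have u1end: "traj f ?xd ?u1 (s - delta) = ?xs"
        using traj_shift[OF us_s, of delta "s - delta"] dpos s0 by simp
      have v': "v \<in> adm f E (T - (s - delta)) (traj f ?xd ?u1 (s - delta))"
        unfolding u1end by (rule adm_inf_adm[OF v(1)]) (use s dpos in auto)
      have wadm: "(\<lambda>t. if t < s - delta then ?u1 t else v (t - (s - delta))) \<in> adm f E ((s - delta) + (T - (s - delta))) ?xd"
        by (rule adm_concat(1)[OF u1 v']) (use s0 s dpos in auto)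
      have "Vfun f E l T ?xd \<le> Jcost f l ((s - delta) + (T - (s - delta))) ?xd (\<lambda>t. if t < s - delta then ?u1 t else v (t - (s - delta)))"
        using V_le[OF wadm] by simp
      also have "\<dots> = Jcost f l (s - delta) ?xd ?u1 + Jcost f l (T - (s - delta)) (traj f ?xd ?u1 (s - delta)) v"
        by (rule concat_cost[OF u1 v']) (use s0 s dpos in auto)
      finally have b1: "Vfun f E l T ?xd \<le> Jcost f l (s - delta) ?xd ?u1 + Jcost f l (T - (s - delta)) (traj f ?xd ?u1 (s - delta)) v" .
      have "Jcost f l (s - delta) ?xd ?u1 = (\<integral>\<^sup>+ r\<in>{delta..s}. ennreal (g r) \<partial>lborel)"
        unfolding g_def by (rule shift_cost[OF us_s]) (use dpos s0 in auto)
      also have "\<dots> \<le> W delta" unfolding W_def using s by (intro nn_integral_mono) (auto split: split_indicator)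
      finally have b2: "Jcost f l (s - delta) ?xd ?u1 \<le> W delta" .
      have "Jcost f l (T - (s - delta)) (traj f ?xd ?u1 (s - delta)) v \<le> Jcost_inf f l ?xs v"
        using Jcost_le_inf u1end by simp
      also have "\<dots> \<le> Vfun_inf f E l ?xs + ennreal (e/2)" using v(2) by simp
      also have "\<dots> \<le> ennreal (gamma * c') + ennreal (e/2)" using Vinf by (rule add_right_mono)
      also have "\<dots> \<le> ennreal (alpha * Ir) + ennreal e"
      proof -
        have "gamma * c' \<le> gamma * (c + eps')" using c'le gpos by (intro mult_left_mono) auto
        also have "\<dots> = gamma * c + e / 2" using gpos by (simp add: eps'_def field_simps)
        finally have "gamma * c' + e/2 \<le> alpha * Ir + e" using key by simp
        then have le1: "ennreal (gamma * c' + e/2) \<le> ennreal (alpha * Ir + e)" by (rule ennreal_leI)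
        have "0 \<le> c'" using c'gt c0 by linarith
        then have gc0: "0 \<le> gamma * c'" using gpos by (intro mult_nonneg_nonneg) auto
        have aI0: "0 \<le> alpha * Ir" using alpha0 Ir0 by (rule mult_nonneg_nonneg)
        have "ennreal (gamma * c') + ennreal (e/2) = ennreal (gamma * c' + e/2)"
          by (rule ennreal_plus[symmetric]) (use gc0 e in auto)
        also have "\<dots> \<le> ennreal (alpha * Ir + e)" by (rule le1)
        also have "\<dots> = ennreal (alpha * Ir) + ennreal e"
          by (rule ennreal_plus) (use aI0 e in auto)
        finally show ?thesis .
      qed
      finally have b3: "Jcost f l (T - (s - delta)) (traj f ?xd ?u1 (s - delta)) v \<le> ennreal (alpha * Ir) + ennreal e" .
      show "Vfun f E l T ?xd \<le> W delta + ennreal (alpha * Ir) + ennreal e"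
        using order.trans[OF b1 add_mono[OF b2 b3]] by (simp add: add.assoc)
    qed

  qed
  have "Vfun f E l T (traj f xh ustar delta) + ennreal (1 - alpha) * I0
      \<le> W delta + ennreal (alpha * Ir) + ennreal ((1 - alpha) * Ir)"
    using main alpha1 Ir0 I0r by (simp add: ennreal_mult add_mono)
  also have "\<dots> = W delta + ennreal Ir"
  proof -
    have aI0: "0 \<le> alpha * Ir" using alpha0 Ir0 by (rule mult_nonneg_nonneg)
    have aI1: "0 \<le> (1 - alpha) * Ir" using alpha1 Ir0 by (intro mult_nonneg_nonneg) auto
    have "ennreal (alpha * Ir) + ennreal ((1 - alpha) * Ir) = ennreal (alpha * Ir + (1 - alpha) * Ir)"
      by (rule ennreal_plus[symmetric]) (use aI0 aI1 in auto)
    also have "alpha * Ir + (1 - alpha) * Ir = Ir" by (simp add: algebra_simps)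
    finally show ?thesis by (simp add: add.assoc)
  qed
  also have "\<dots> = W 0" using W0split I0r by (simp add: add.commute)
  finally have fin: "Vfun f E l T (traj f xh ustar delta) + ennreal (1 - alpha) * I0 \<le> Vfun f E l T xh"
    using W0 by simp
  then show "Vfun f E l (real N * delta) (traj f xh ustar delta)
             + ennreal (1 - alpha) * (\<integral>\<^sup>+ s \<in> {0..delta}. ennreal (l (traj f xh ustar s) (ustar s)) \<partial>lborel)
           \<le> Vfun f E l (real N * delta) xh"
    unfolding T_def I0_def g_def .
qed

end
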